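(* Consider $f:\mathbb R^n\to\mathbb R$ convex and continuously differentiable, $A\in\mathbb R^{m\times n}$, $b\in\mathbb R^m$, with nonempty KKT set $\Omega$. Let $\{(x_k,\lambda_k)\}_{k\ge0}$ be generated by the algorithm described in the context (Case I or Case II), write $z_k=(x_k,\lambda_k)$, $\bar z_k=(\bar x_k,\bar\lambda_k)$, and fix $z^*=(x^*,\lambda^* )\in\Omega$. Define, for $k\ge1$, $w_k=\eta(z_k-z^* )+(t_k-1)(z_k-z_{k-1})$ and $B_k=\frac12\|w_k\|_M^2+\frac{\eta(1-\eta)}2\|z_k-z^*\|_M^2$. Then for every $k\ge1$, $B_{k+1}-B_k=-\eta t_{k+1}\langle x_{k+1}-x^*,\,g_{k+1}+\beta A^\top(Ax_{k+1}-b)+A^\top\lambda^*\rangle - t_{k+1}(t_{k+1}-\eta)\langle x_{k+1}-x_k,\,g_{k+1}+\beta A^\top(Ax_{k+1}-b)+A^\top\lambda^*\rangle-(1-\eta)(t_{k+1}-\tfrac12)\|z_{k+1}-z_k\|_M^2-\frac{t_{k+1}^2}{2}\|z_{k+1}-\bar z_k\|_M^2$, where $g_{k+1}=\nabla f(x_{k+1})$ in Case I and $g_{k+1}=\nabla f(\bar x_k)$ in Case II.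
   Context: The KKT set is $\Omega=\{(x^*,\lambda^* ): Ax^*=b,\ \nabla f(x^* )+A^\top\lambda^*=0\}$. For $z=(x,\lambda)$, $\|z\|_M^2=\frac1\gamma\|x\|^2+\frac1\delta\|\lambda\|^2$. Parameter sequence: $\{t_k\}_{k\ge1}$ is nondecreasing, $t_1=1$, $t_k>1$ for all $k>2$, $t_k\to+\infty$, and $t_{k+1}^2-t_k^2\le\rho t_{k+1}$ for all $k\ge 1$, with fixed $\rho\in(0,1]$. Fix $\eta\in[\rho,1]$, $\gamma>0$, $\delta>0$, $\beta\ge0$. Algorithm: initial points $x_0=x_1\in\mathbb R^n$, $\lambda_0=\lambda_1\in\mathbb R^m$. For $k=1,2,\dots$: set $\alpha_k=(t_{k+1}-\eta)/\eta$, $c_k=t_{k+1}/\eta$, $\bar x_k=x_k+\frac{t_k-1}{t_{k+1}}(x_k-x_{k-1})$, $\bar\lambda_k=\lambda_k+\frac{t_k-1}{t_{k+1}}(\lambda_k-\lambda_{k-1})$, $p_k=c_k\bar\lambda_k-\alpha_k\lambda_k$, $r_k=\alpha_kAx_k+b$. Case I ($f$ convex and $C^1$): $x_{k+1}=\arg\min_{x}\{f(x)+\frac\beta2\|Ax-b\|^2+\frac1{2\gamma}\|x-\bar x_k\|^2+\langle p_k,Ax-b\rangle+\frac\delta2\|c_kAx-r_k\|^2\}$. Case II ($f$ convex with $L$-Lipschitz gradient, and $\gamma\le 1/L$): $x_{k+1}=\arg\min_{x}\{\langle\nabla f(\bar x_k),x\rangle+\frac\beta2\|Ax-b\|^2+\frac1{2\gamma}\|x-\bar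 x_k\|^2+\langle p_k,Ax-b\rangle+\frac\delta2\|c_kAx-r_k\|^2\}$. Then $\lambda_{k+1}=\bar\lambda_k+\delta(c_kAx_{k+1}-r_k)$. *)

theory Defs
  imports "HOL-Analysis.Analysis"
begin

definition Mnorm2 :: "real \<Rightarrow> real \<Rightarrow> real^'n \<Rightarrow> real^'m \<Rightarrow> real" where
  "Mnorm2 \<gamma> \<delta> u v = (norm u)^2 / \<gamma> + (norm v)^2 / \<delta>"

definition extrap :: "(nat \<Rightarrow> real) \<Rightarrow> (nat \<Rightarrow> 'a::real_vector) \<Rightarrow> nat \<Rightarrow> 'a" where
  "extrap t x k = x k + ((t k - 1) / t (Suc k)) *\<^sub>R (x k - x (k - 1))"

definition alg_alpha :: "real \<Rightarrow> (nat \<Rightarrow> real) \<Rightarrow> nat \<Rightarrow> real" where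
  "alg_alpha \<eta> t k = (t (Suc k) - \<eta>) / \<eta>"

definition alg_c :: "real \<Rightarrow> (nat \<Rightarrow> real) \<Rightarrow> nat \<Rightarrow> real" where
  "alg_c \<eta> t k = t (Suc k) / \<eta>"

definition alg_p :: "real \<Rightarrow> (nat \<Rightarrow> real) \<Rightarrow> (nat \<Rightarrow> real^'m) \<Rightarrow> nat \<Rightarrow> real^'m" where
  "alg_p \<eta> t lam k = alg_c \<eta> t k *\<^sub>R extrap t lam k - alg_alpha \<eta> t k *\<^sub>R lam k"

definition alg_r :: "real \<Rightarrow> (nat \<Rightarrow> real) \<Rightarrow> real^'n^'m \<Rightarrow> real^'m \<Rightarrow> (nat \<Rightarrow> real^'n) \<Rightarrow> nat \<Rightarrow> real^'m" where
  "alg_r \<eta> t A b x k = alg_alpha \<eta> t k *\<^sub>R (A *v x k) + b"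

text \<open>Objective of the x-subproblem at iteration k; F is f (Case I) or the
  linearization y |-> <grad f(xbar_k), y> (Case II).\<close>
definition alg_obj :: "(real^'n \<Rightarrow> real) \<Rightarrow> real \<Rightarrow> real \<Rightarrow> real \<Rightarrow> real \<Rightarrow> (nat \<Rightarrow> real)
    \<Rightarrow> real^'n^'m \<Rightarrow> real^'m \<Rightarrow> (nat \<Rightarrow> real^'n) \<Rightarrow> (nat \<Rightarrow> real^'m) \<Rightarrow> nat \<Rightarrow> real^'n \<Rightarrow> real" where
  "alg_obj F \<beta> \<gamma> \<delta> \<eta> t A b x lam k y =
     F y + \<beta> / 2 * (norm (A *v y - b))^2 + 1 / (2 * \<gamma>) * (norm (y - extrap t x k))^2
     + alg_p \<eta> t lam k \<bullet> (A *v y - b)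
     + \<delta> / 2 * (norm (alg_c \<eta> t k *\<^sub>R (A *v y) - alg_r \<eta> t A b x k))^2"

definition lyapB :: "real \<Rightarrow> real \<Rightarrow> real \<Rightarrow> (nat \<Rightarrow> real) \<Rightarrow> (nat \<Rightarrow> real^'n) \<Rightarrow> (nat \<Rightarrow> real^'m)
    \<Rightarrow> real^'n \<Rightarrow> real^'m \<Rightarrow> nat \<Rightarrow> real" where
  "lyapB \<gamma> \<delta> \<eta> t x lam xs ls k =
     1/2 * Mnorm2 \<gamma> \<delta> (\<eta> *\<^sub>R (x k - xs) + (t k - 1) *\<^sub>R (x k - x (k - 1)))
                      (\<eta> *\<^sub>R (lam k - ls) + (t k - 1) *\<^sub>R (lam k - lam (k - 1)))
     + \<eta> * (1 - \<eta>) / 2 * Mnorm2 \<gamma> \<delta> (x k - xs) (lam k - ls)"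

end

theory Submission
  imports Defs
begin

lemma ident:
  fixes a e q :: "'a::real_inner" and n T :: real
  shows "1/2 * (norm (n *\<^sub>R a + (T-1) *\<^sub>R (a-e)))^2 + n*(1-n)/2*(norm a)^2
         - 1/2 * (norm (n *\<^sub>R e + T *\<^sub>R q))^2 - n*(1-n)/2*(norm e)^2
       = T * ((a-e-q) \<bullet> (n *\<^sub>R a + (T-n) *\<^sub>R (a-e))) - (1-n)*(T-1/2)*(norm (a-e))^2
         - T^2/2 * (norm (a-e-q))^2"
  unfolding power2_norm_eq_inner
  by (simp add: inner_diff_left inner_diff_right inner_add_left
     inner_add_right inner_commute algebra_simps power2_eq_square)
     (simp add: field_simps)

lemma adj: "(A *v h) \<bullet> (w::real^'m) = (h::real^'n) \<bullet> (transpose A *v w)"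
  by (metis dot_lmul_matrix inner_commute transpose_matrix_vector)

lemma dnorm:
  fixes A :: "real^'n^'m"
  shows "((\<lambda>y. (norm (c *\<^sub>R (A *v y) - r))^2) has_derivative
     (\<lambda>h. (2 * c) *\<^sub>R (transpose A *v (c *\<^sub>R (A *v y) - r)) \<bullet> h)) (at y)"
proof -
  have d: "((\<lambda>y. c *\<^sub>R (A *v y) - r) has_derivative (\<lambda>h. c *\<^sub>R (A *v h))) (at y)"
    by (auto intro!: derivative_eq_intros bounded_linear.has_derivative[OF matrix_vector_mul_bounded_linear])
  have "((\<lambda>y. (c *\<^sub>R (A *v y) - r) \<bullet> (c *\<^sub>R (A *v y) - r)) has_derivative
     (\<lambda>h. (c *\<^sub>R (A *v y) - r) \<bullet> (c *\<^sub>R (A *v h)) + (c *\<^sub>R (A *v h)) \<bullet> (c *\<^sub>R (A *v y) - r))) (at y)"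
    by (rule has_derivative_inner[OF d d])
  then show ?thesis
    unfolding power2_norm_eq_inner
    apply (rule has_derivative_eq_rhs)
    apply (rule ext)
    subgoal for h
      by (simp add: adj inner_commute[of "transpose A *v _" h] inner_commute[of _ "A *v h"] algebra_simps del: transpose_matrix_vector)
    done
qed

lemma dnorm1:
  fixes A :: "real^'n^'m"
  shows "((\<lambda>y. (norm (A *v y - r))^2) has_derivative
     (\<lambda>h. (2 *\<^sub>R (transpose A *v (A *v y - r))) \<bullet> h)) (at y)"
  using dnorm[of 1 A r y] by simp

lemma dsq:
  fixes z :: "'a::real_inner"
  shows "((\<lambda>y. (norm (y - z))^2) has_derivative (\<lambda>h. (2 *\<^sub>R (y - z)) \<bullet> h)) (at y)"
proof -
  have d: "((\<lambda>y. y - z) has_derivative (\<lambda>h. h)) (at y)"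
    by (auto intro!: derivative_eq_intros)
  show ?thesis unfolding power2_norm_eq_inner
    apply (rule has_derivative_eq_rhs[OF has_derivative_inner[OF d d]])
    by (auto simp: inner_commute)
qed

lemma dlin:
  fixes A :: "real^'n^'m"
  shows "((\<lambda>y. p \<bullet> (A *v y - b)) has_derivative (\<lambda>h. (transpose A *v p) \<bullet> h)) (at y)"
proof -
  have d: "((\<lambda>y. A *v y - b) has_derivative (\<lambda>h. A *v h)) (at y)"
    by (auto intro!: derivative_eq_intros bounded_linear.has_derivative[OF matrix_vector_mul_bounded_linear])
  show ?thesis
    apply (rule has_derivative_eq_rhs[OF bounded_linear.has_derivative[OF bounded_linear_inner_right d]])
    by (rule ext) (metis dot_lmul_matrix inner_commute transpose_matrix_vector)
qed

lemma regroup: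
  fixes a1 a2 b1 b2 c1 c2 d1 d2 g d e :: real
  shows "1/2 * (a1/g + a2/d) + e*(1-e)/2*(b1/g + b2/d) - (1/2*(c1/g+c2/d) + e*(1-e)/2*(d1/g+d2/d))
   = (1/g)*(1/2*a1 + e*(1-e)/2*b1 - 1/2*c1 - e*(1-e)/2*d1) + (1/d)*(1/2*a2 + e*(1-e)/2*b2 - 1/2*c2 - e*(1-e)/2*d2)"
  unfolding divide_inverse by algebra

theorem lemma3p1:
  fixes f :: "real^'n \<Rightarrow> real" and grad :: "real^'n \<Rightarrow> real^'n"
    and A :: "real^'n^'m" and b :: "real^'m"
    and t :: "nat \<Rightarrow> real" and \<rho> \<eta> \<gamma> \<delta> \<beta> L :: real
    and x :: "nat \<Rightarrow> real^'n" and lam :: "nat \<Rightarrow> real^'m"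
    and xs :: "real^'n" and ls :: "real^'m"
    and caseII :: bool
  assumes f_convex: "convex_on UNIV f"
    and f_grad: "\<And>y. (f has_derivative (\<lambda>h. grad y \<bullet> h)) (at y)"
    and grad_cont: "continuous_on UNIV grad"
    and caseII_lip: "caseII \<Longrightarrow> L > 0 \<and> L-lipschitz_on UNIV grad \<and> \<gamma> \<le> 1 / L"
    and KKT: "A *v xs = b" "grad xs + transpose A *v ls = 0"
    and t_one: "t 1 = 1"
    and t_mono: "\<And>k. k \<ge> 1 \<Longrightarrow> t k \<le> t (Suc k)"
    and t_gt1: "\<And>k. k > 2 \<Longrightarrow> t k > 1"
    and t_lim: "filterlim t at_top sequentially"
    and t_growth: "\<And>k. k \<ge> 1 \<Longrightarrow> (t (Suc k))^2 - (t k)^2 \<le> \<rho> * t (Suc k)"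
    and rho: "0 < \<rho>" "\<rho> \<le> 1"
    and eta: "\<rho> \<le> \<eta>" "\<eta> \<le> 1"
    and gamma: "\<gamma> > 0" and delta: "\<delta> > 0" and beta: "\<beta> \<ge> 0"
    and init: "x 0 = x 1" "lam 0 = lam 1"
    and x_step: "\<And>k y. k \<ge> 1 \<Longrightarrow>
        alg_obj (if caseII then (\<lambda>u. grad (extrap t x k) \<bullet> u) else f)
                \<beta> \<gamma> \<delta> \<eta> t A b x lam k (x (Suc k))
        \<le> alg_obj (if caseII then (\<lambda>u. grad (extrap t x k) \<bullet> u) else f)
                \<beta> \<gamma> \<delta> \<eta> t A b x lam k y"
    and lam_step: "\<And>k. k \<ge> 1 \<Longrightarrow>
        lam (Suc k) = extrap t lam k
          + \<delta> *\<^sub>R (alg_c \<eta> t k *\<^sub>R (A *v x (Suc k)) - alg_r \<eta> t A b x k)"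
  shows "\<forall>k\<ge>1.
    (let g = (if caseII then grad (extrap t x k) else grad (x (Suc k)));
         v = g + \<beta> *\<^sub>R (transpose A *v (A *v x (Suc k) - b)) + transpose A *v ls
     in lyapB \<gamma> \<delta> \<eta> t x lam xs ls (Suc k) - lyapB \<gamma> \<delta> \<eta> t x lam xs ls k
        = - \<eta> * t (Suc k) * ((x (Suc k) - xs) \<bullet> v)
          - t (Suc k) * (t (Suc k) - \<eta>) * ((x (Suc k) - x k) \<bullet> v)
          - (1 - \<eta>) * (t (Suc k) - 1/2) * Mnorm2 \<gamma> \<delta> (x (Suc k) - x k) (lam (Suc k) - lam k)
          - (t (Suc k))^2 / 2 * Mnorm2 \<gamma> \<delta> (x (Suc k) - extrap t x k) (lam (Suc k) - extrap t lam k))"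
proof (intro allI impI)
  fix k :: nat assume k1: "k \<ge> 1"
  have tge1: "\<And>j. j \<ge> 1 \<Longrightarrow> t j \<ge> 1"
  proof -
    fix j :: nat assume "j \<ge> 1"
    then show "t j \<ge> 1"
    proof (induction j rule: dec_induct)
      case base then show ?case using t_one by simp
    next
      case (step m) then show ?case using t_mono[of m] by simp
    qed
  qed
  have eta0: "\<eta> > 0" using rho eta by simp
  define T where "T = t (Suc k)"
  have T1: "T \<ge> 1" unfolding T_def using tge1 k1 by simp
  define xb where "xb = extrap t x k"
  define lb where "lb = extrap t lam k"
  define X1 where "X1 = x (Suc k)"
  define X0 where "X0 = x k"
  define L1 where "L1 = lam (Suc k)"
  define L0 where "L0 = lam k"
  define c where "c = alg_c \<eta> t k"
  define \<alpha> where "\<alpha> = alg_alpha \<eta> t k"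
  define p where "p = alg_p \<eta> t lam k"
  define r where "r = alg_r \<eta> t A b x k"
  define g where "g = (if caseII then grad xb else grad X1)"
  define v where "v = g + \<beta> *\<^sub>R (transpose A *v (A *v X1 - b)) + transpose A *v ls"
  define ux where "ux = \<eta> *\<^sub>R (X1 - xs) + (T - \<eta>) *\<^sub>R (X1 - X0)"
  define ul where "ul = \<eta> *\<^sub>R (L1 - ls) + (T - \<eta>) *\<^sub>R (L1 - L0)"
  have c_def': "c = T / \<eta>" unfolding c_def alg_c_def T_def by simp
  have a_def': "\<alpha> = (T - \<eta>) / \<eta>" unfolding \<alpha>_def alg_alpha_def T_def by simp
  have p_def': "p = c *\<^sub>R lb - \<alpha> *\<^sub>R L0" unfolding p_def alg_p_def c_def \<alpha>_def lb_def L0_def by simp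
  have r_def': "r = \<alpha> *\<^sub>R (A *v X0) + b" unfolding r_def alg_r_def \<alpha>_def X0_def by simp
  have lstep: "L1 = lb + \<delta> *\<^sub>R (c *\<^sub>R (A *v X1) - r)"
    using lam_step[OF k1] unfolding L1_def lb_def c_def r_def X1_def by simp
  define Fc where "Fc = (if caseII then (\<lambda>u. grad (extrap t x k) \<bullet> u) else f)"
  have dF: "(Fc has_derivative (\<lambda>h. g \<bullet> h)) (at X1)"
  proof (cases caseII)
    case True
    then show ?thesis unfolding Fc_def g_def xb_def
      by (simp add: bounded_linear_imp_has_derivative bounded_linear_inner_right)
  next
    case False
    then show ?thesis unfolding Fc_def g_def using f_grad by simp
  qed
  define G where "G = g + \<beta> *\<^sub>R (transpose A *v (A *v X1 - b)) + (1/\<gamma>) *\<^sub>R (X1 - xb)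
     + transpose A *v p + (\<delta> * c) *\<^sub>R (transpose A *v (c *\<^sub>R (A *v X1) - r))"
  have dO: "(alg_obj Fc \<beta> \<gamma> \<delta> \<eta> t A b x lam k has_derivative (\<lambda>h. G \<bullet> h)) (at X1)"
    unfolding alg_obj_def xb_def[symmetric] p_def[symmetric] c_def[symmetric] r_def[symmetric]
    apply (rule has_derivative_eq_rhs)
     apply (rule has_derivative_add[OF has_derivative_add[OF has_derivative_add[OF has_derivative_add[OF dF
        has_derivative_mult_right[OF dnorm1]] has_derivative_mult_right[OF dsq]] dlin] has_derivative_mult_right[OF dnorm]])
    apply (rule ext)
    apply (simp add: G_def inner_add_left algebra_simps del: transpose_matrix_vector)
    done
  have "(\<lambda>h. G \<bullet> h) = (\<lambda>h. 0)"
    apply (rule differential_zero_maxmin[of X1 UNIV, OF _ _ dO])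
    using x_step[OF k1] unfolding Fc_def X1_def by auto
  then have "G \<bullet> G = 0" by metis
  then have G0: "G = 0" by simp
  have T0: "T \<noteq> 0" using T1 by simp
  have ext_x: "(t k - 1) *\<^sub>R (X0 - x (k-1)) = T *\<^sub>R (xb - X0)"
    using T0 unfolding xb_def extrap_def X0_def T_def by simp
  have ext_l: "(t k - 1) *\<^sub>R (L0 - lam (k-1)) = T *\<^sub>R (lb - L0)"
    using T0 unfolding lb_def extrap_def L0_def T_def by simp
  have dl: "\<delta> *\<^sub>R (c *\<^sub>R (A *v X1) - r) = L1 - lb" using lstep by simp
  have dl2: "(\<delta> * c) *\<^sub>R (c *\<^sub>R (A *v X1) - r) = c *\<^sub>R (L1 - lb)"
    using dl by (metis scaleR_scaleR mult.commute)
  have M1: "p + (\<delta> * c) *\<^sub>R (c *\<^sub>R (A *v X1) - r) = ls + (1/\<eta>) *\<^sub>R ul"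
    unfolding dl2 unfolding p_def' ul_def c_def' a_def' using eta0
    by (simp add: vec_eq_iff field_simps)
  have "transpose A *v p + (\<delta> * c) *\<^sub>R (transpose A *v (c *\<^sub>R (A *v X1) - r))
      = transpose A *v (p + (\<delta> * c) *\<^sub>R (c *\<^sub>R (A *v X1) - r))"
    by (simp add: matrix_vector_right_distrib matrix_vector_mult_scaleR del: transpose_matrix_vector)
  also have "\<dots> = transpose A *v ls + (1/\<eta>) *\<^sub>R (transpose A *v ul)"
    unfolding M1 by (simp add: matrix_vector_right_distrib matrix_vector_mult_scaleR del: transpose_matrix_vector)
  finally have M2: "transpose A *v p + (\<delta> * c) *\<^sub>R (transpose A *v (c *\<^sub>R (A *v X1) - r))
      = transpose A *v ls + (1/\<eta>) *\<^sub>R (transpose A *v ul)" .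
  have E1: "(1/\<gamma>) *\<^sub>R (X1 - xb) = -(v + (1/\<eta>) *\<^sub>R (transpose A *v ul))"
  proof -
    have "G = g + \<beta> *\<^sub>R (transpose A *v (A *v X1 - b)) + (1/\<gamma>) *\<^sub>R (X1 - xb)
       + (transpose A *v ls + (1/\<eta>) *\<^sub>R (transpose A *v ul))"
      unfolding G_def M2[symmetric] by (simp add: algebra_simps del: transpose_matrix_vector)
    then show ?thesis using G0 unfolding v_def
      by (simp add: algebra_simps eq_neg_iff_add_eq_0 del: transpose_matrix_vector)
  qed
  have Aux: "A *v ux = \<eta> *\<^sub>R (A *v X1 - b) + (T - \<eta>) *\<^sub>R (A *v X1 - A *v X0)"
    unfolding ux_def using KKT(1)
    by (simp add: matrix_vector_right_distrib matrix_vector_mult_scaleR matrix_vector_mult_diff_distrib)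
  have E2: "(1/\<delta>) *\<^sub>R (L1 - lb) = (1/\<eta>) *\<^sub>R (A *v ux)"
    unfolding dl[symmetric] Aux r_def' c_def' a_def' using eta0 delta
    by (simp add: vec_eq_iff field_simps)
  have key: "(1/\<gamma>) * ((X1 - xb) \<bullet> ux) + (1/\<delta>) * ((L1 - lb) \<bullet> ul) = -(v \<bullet> ux)"
  proof -
    have a: "(1/\<gamma>) * ((X1 - xb) \<bullet> ux) = -(v \<bullet> ux) - (1/\<eta>) * ((transpose A *v ul) \<bullet> ux)"
      using arg_cong[OF E1, of "\<lambda>z. z \<bullet> ux"] by (simp add: inner_add_left inner_diff_left del: transpose_matrix_vector)
    have b: "(1/\<delta>) * ((L1 - lb) \<bullet> ul) = (1/\<eta>) * ((transpose A *v ul) \<bullet> ux)"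
      using arg_cong[OF E2, of "\<lambda>z. z \<bullet> ul"] adj[of A ux ul] by (simp add: inner_commute del: transpose_matrix_vector)
    show ?thesis using a b by simp
  qed
  have vux: "v \<bullet> ux = \<eta> * ((X1 - xs) \<bullet> v) + (T - \<eta>) * ((X1 - X0) \<bullet> v)"
    unfolding ux_def by (simp add: inner_add_right inner_commute)
  have e1: "(X1 - xs) - (X0 - xs) = X1 - X0" "(X1 - xs) - (X0 - xs) - (xb - X0) = X1 - xb"
    by (simp_all add: algebra_simps)
  have e2: "(L1 - ls) - (L0 - ls) = L1 - L0" "(L1 - ls) - (L0 - ls) - (lb - L0) = L1 - lb"
    by (simp_all add: algebra_simps)
  have Ix: "1/2 * (norm (\<eta> *\<^sub>R (X1-xs) + (T-1) *\<^sub>R (X1-X0)))^2 + \<eta>*(1-\<eta>)/2*(norm (X1-xs))^2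
         - 1/2 * (norm (\<eta> *\<^sub>R (X0-xs) + (t k - 1) *\<^sub>R (X0 - x (k-1))))^2 - \<eta>*(1-\<eta>)/2*(norm (X0-xs))^2
       = T * ((X1-xb) \<bullet> ux) - (1-\<eta>)*(T-1/2)*(norm (X1-X0))^2 - T^2/2 * (norm (X1-xb))^2"
    using ident[of \<eta> "X1-xs" T "X0-xs" "xb-X0"] unfolding e1 ext_x ux_def by simp
  have Il: "1/2 * (norm (\<eta> *\<^sub>R (L1-ls) + (T-1) *\<^sub>R (L1-L0)))^2 + \<eta>*(1-\<eta>)/2*(norm (L1-ls))^2
         - 1/2 * (norm (\<eta> *\<^sub>R (L0-ls) + (t k - 1) *\<^sub>R (L0 - lam (k-1))))^2 - \<eta>*(1-\<eta>)/2*(norm (L0-ls))^2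
       = T * ((L1-lb) \<bullet> ul) - (1-\<eta>)*(T-1/2)*(norm (L1-L0))^2 - T^2/2 * (norm (L1-lb))^2"
    using ident[of \<eta> "L1-ls" T "L0-ls" "lb-L0"] unfolding e2 ext_l ul_def by simp
  have main: "lyapB \<gamma> \<delta> \<eta> t x lam xs ls (Suc k) - lyapB \<gamma> \<delta> \<eta> t x lam xs ls k
     = - \<eta> * T * ((X1 - xs) \<bullet> v) - T * (T - \<eta>) * ((X1 - X0) \<bullet> v)
       - (1 - \<eta>) * (T - 1/2) * Mnorm2 \<gamma> \<delta> (X1 - X0) (L1 - L0)
       - T^2 / 2 * Mnorm2 \<gamma> \<delta> (X1 - xb) (L1 - lb)"
  proof -
    have "lyapB \<gamma> \<delta> \<eta> t x lam xs ls (Suc k) - lyapB \<gamma> \<delta> \<eta> t x lam xs ls k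
      = (1/\<gamma>) * (T * ((X1-xb) \<bullet> ux) - (1-\<eta>)*(T-1/2)*(norm (X1-X0))^2 - T^2/2 * (norm (X1-xb))^2)
      + (1/\<delta>) * (T * ((L1-lb) \<bullet> ul) - (1-\<eta>)*(T-1/2)*(norm (L1-L0))^2 - T^2/2 * (norm (L1-lb))^2)"
      unfolding Ix[symmetric] Il[symmetric]
      unfolding lyapB_def Mnorm2_def diff_Suc_1 X1_def X0_def L1_def L0_def T_def
      by (rule regroup)
    also have "\<dots> = T * ((1/\<gamma>) * ((X1 - xb) \<bullet> ux) + (1/\<delta>) * ((L1 - lb) \<bullet> ul))
      - (1 - \<eta>) * (T - 1/2) * Mnorm2 \<gamma> \<delta> (X1 - X0) (L1 - L0)
       - T^2 / 2 * Mnorm2 \<gamma> \<delta> (X1 - xb) (L1 - lb)"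
      unfolding Mnorm2_def using gamma delta by (simp add: field_simps)
    also have "\<dots> = - \<eta> * T * ((X1 - xs) \<bullet> v) - T * (T - \<eta>) * ((X1 - X0) \<bullet> v)
       - (1 - \<eta>) * (T - 1/2) * Mnorm2 \<gamma> \<delta> (X1 - X0) (L1 - L0)
       - T^2 / 2 * Mnorm2 \<gamma> \<delta> (X1 - xb) (L1 - lb)"
      unfolding key vux by (simp add: algebra_simps)
    finally show ?thesis .
  qed
  show "let g = (if caseII then grad (extrap t x k) else grad (x (Suc k)));
         v = g + \<beta> *\<^sub>R (transpose A *v (A *v x (Suc k) - b)) + transpose A *v ls
     in lyapB \<gamma> \<delta> \<eta> t x lam xs ls (Suc k) - lyapB \<gamma> \<delta> \<eta> t x lam xs ls k
        = - \<eta> * t (Suc k) * ((x (Suc k) - xs) \<bullet> v)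
          - t (Suc k) * (t (Suc k) - \<eta>) * ((x (Suc k) - x k) \<bullet> v)
          - (1 - \<eta>) * (t (Suc k) - 1/2) * Mnorm2 \<gamma> \<delta> (x (Suc k) - x k) (lam (Suc k) - lam k)
          - (t (Suc k))^2 / 2 * Mnorm2 \<gamma> \<delta> (x (Suc k) - extrap t x k) (lam (Suc k) - extrap t lam k)"
    using main unfolding Let_def v_def g_def X1_def X0_def L1_def L0_def T_def xb_def lb_def by simp
qed

end
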